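(* Consider a symmetric two-player game $(X,\pi)$ with compact action set $X$ and payoff function of the form $\pi(x,y)=f(x)+g(y)+a(x,y)$ for some continuous functions $f,g:X\to\mathbb{R}$ and a symmetric function $a:X\times X\to\mathbb{R}$ (i.e. $a(x,y)=a(y,x)$ for all $x,y\in X$). Then imitation is essentially unbeatable.
   Context: $\pi(x,y)$ is the payoff of the player choosing $x$ against $y$ (assumed bounded). Relative payoff: $\Delta(x,y)=\pi(x,y)-\pi(y,x)$, and $\hat\Delta:=\max_{x,y\in X}\Delta(x,y)$. Imitate-the-best: given initial $y_0\in X$ and any opponent sequence $(x_t)_{t\ge0}$ in $X$, $y_t=x_{t-1}$ if $\Delta(x_{t-1},y_{t-1})>0$ and $y_t=y_{t-1}$ otherwise. Imitation is essentially unbeatable if for every $y_0\in X$ and every sequence $(x_t)$, $\limsup_{T\to\infty}\sum_{t=0}^T\Delta(x_t,y_t)\le\hat\Delta$. *)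

theory Defs
  imports "HOL-Analysis.Analysis" "HOL-Library.Liminf_Limsup"
begin

definition rel_payoff :: "('a \<Rightarrow> 'a \<Rightarrow> real) \<Rightarrow> 'a \<Rightarrow> 'a \<Rightarrow> real" where
  "rel_payoff \<pi> x y = \<pi> x y - \<pi> y x"

definition max_rel_payoff :: "'a set \<Rightarrow> ('a \<Rightarrow> 'a \<Rightarrow> real) \<Rightarrow> real" where
  "max_rel_payoff X \<pi> = (SUP p\<in>X \<times> X. rel_payoff \<pi> (fst p) (snd p))"

fun imitate :: "('a \<Rightarrow> 'a \<Rightarrow> real) \<Rightarrow> 'a \<Rightarrow> (nat \<Rightarrow> 'a) \<Rightarrow> nat \<Rightarrow> 'a" where
  "imitate \<pi> y0 xs 0 = y0"
| "imitate \<pi> y0 xs (Suc t) =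
     (if rel_payoff \<pi> (xs t) (imitate \<pi> y0 xs t) > 0 then xs t else imitate \<pi> y0 xs t)"

definition essentially_unbeatable :: "'a set \<Rightarrow> ('a \<Rightarrow> 'a \<Rightarrow> real) \<Rightarrow> bool" where
  "essentially_unbeatable X \<pi> \<longleftrightarrow>
     (\<forall>y0\<in>X. \<forall>xs. (\<forall>t. xs t \<in> X) \<longrightarrow>
        limsup (\<lambda>T. ereal (\<Sum>t\<le>T. rel_payoff \<pi> (xs t) (imitate \<pi> y0 xs t)))
          \<le> ereal (max_rel_payoff X \<pi>))"

end

theory Submission
  imports Defs
begin

lemma imitate_in:
  assumes "y0 \<in> X" "\<forall>t. xs t \<in> X"
  shows "imitate \<pi> y0 xs t \<in> X"
  using assms by (induction t) auto

theorem corollary3: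
  fixes X :: "'a::topological_space set"
    and \<pi> :: "'a \<Rightarrow> 'a \<Rightarrow> real"
    and f g :: "'a \<Rightarrow> real"
    and a :: "'a \<Rightarrow> 'a \<Rightarrow> real"
  assumes "compact X"
    and "continuous_on X f" and "continuous_on X g"
    and "\<And>x y. x \<in> X \<Longrightarrow> y \<in> X \<Longrightarrow> a x y = a y x"
    and "\<And>x y. x \<in> X \<Longrightarrow> y \<in> X \<Longrightarrow> \<pi> x y = f x + g y + a x y"
    and "bounded ((\<lambda>p. \<pi> (fst p) (snd p)) ` (X \<times> X))"
  shows "essentially_unbeatable X \<pi>"
  unfolding essentially_unbeatable_def
proof (intro ballI allI impI)
  fix y0 and xs :: "nat \<Rightarrow> 'a" assume y0: "y0 \<in> X" and xs: "\<forall>t. xs t \<in> X"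
  define h where "h x = f x - g x" for x
  have rp: "rel_payoff \<pi> x y = h x - h y" if "x \<in> X" "y \<in> X" for x y
    using assms(4,5)[OF that] assms(4,5)[OF that(2,1)] that
    unfolding rel_payoff_def h_def by simp
  define y where "y = imitate \<pi> y0 xs"
  have yX: "y t \<in> X" for t unfolding y_def using imitate_in[OF y0 xs] .
  have ystep: "h (y (Suc t)) = max (h (xs t)) (h (y t))" for t
    using rp[OF xs[rule_format] yX] unfolding y_def by auto
  have key: "(\<Sum>t\<le>T. rel_payoff \<pi> (xs t) (y t)) \<le> h (y (Suc T)) - h y0" for T
  proof (induction T)
    case 0
    have "y 0 = y0" unfolding y_def by simp
    then show ?case using rp[OF xs[rule_format, of 0] yX[of 0]] ystep[of 0] by simp
  next
    case (Suc T)
    have "rel_payoff \<pi> (xs (Suc T)) (y (Suc T)) \<le> h (y (Suc (Suc T))) - h (y (Suc T))"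
      using rp[OF xs[rule_format, of "Suc T"] yX[of "Suc T"]] ystep[of "Suc T"] by simp
    then show ?case using Suc by simp
  qed
  obtain B where B: "\<forall>z\<in>(\<lambda>p. \<pi> (fst p) (snd p)) ` (X \<times> X). norm z \<le> B"
    using assms(6) bounded_iff by blast
  have bdd: "bdd_above ((\<lambda>p. rel_payoff \<pi> (fst p) (snd p)) ` (X \<times> X))"
  proof (rule bdd_aboveI2)
    fix p assume p: "p \<in> X \<times> X"
    then have "norm (\<pi> (fst p) (snd p)) \<le> B" "norm (\<pi> (snd p) (fst p)) \<le> B"
      using B by (auto simp: mem_Times_iff)
    then show "rel_payoff \<pi> (fst p) (snd p) \<le> 2 * B" unfolding rel_payoff_def by simp
  qed
  have M: "h (y (Suc T)) - h y0 \<le> max_rel_payoff X \<pi>" for T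
  proof -
    have "h (y (Suc T)) - h y0 = rel_payoff \<pi> (fst (y (Suc T), y0)) (snd (y (Suc T), y0))"
      using rp[OF yX y0] by simp
    also have "\<dots> \<le> max_rel_payoff X \<pi>" unfolding max_rel_payoff_def
      by (rule cSUP_upper[OF _ bdd]) (use yX y0 in auto)
    finally show ?thesis .
  qed
  show "limsup (\<lambda>T. ereal (\<Sum>t\<le>T. rel_payoff \<pi> (xs t) (imitate \<pi> y0 xs t)))
          \<le> ereal (max_rel_payoff X \<pi>)"
    apply (rule Limsup_bounded)
    apply (rule always_eventually)
    using key M unfolding y_def by (meson order_trans ereal_less_eq(3))
qed

end
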